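(* Let $T$ be a measure-preserving automorphism of a standard probability Borel space $(X,\mathcal{B},\mu)$, where $X$ is endowed with a metric $d$ generating the $\sigma$-algebra $\mathcal{B}$. Let $\{W_n\}_{n\in\mathbb{N}}$ be measurable subsets of $X$ and $\{q_n\}_{n\in\mathbb{N}}$ an increasing sequence of natural numbers. If $\sup_{x\in W_n}d(T^{q_n}x,x)\to 0$, then $\{q_n\}$ is a rigidity sequence for $T$ along $\{W_n\}$.
   Context: $\{q_n\}$ is a rigidity sequence for $T$ along $\{W_n\}$ if $\mu((T^{-q_n}A\,\triangle\, A)\cap W_n)\to 0$ for every $A\in\mathcal{B}$. *)

theory Defs
  imports "HOL-Analysis.Analysis" "HOL-Probability.Probability"
begin

text \<open>A measurable space is standard Borel if it is Borel isomorphic to a Polish space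
  (here: to the Borel sigma algebra of some Polish type 'b).\<close>
definition standard_borel_via :: "'a measure \<Rightarrow> ('a \<Rightarrow> 'b::polish_space) \<Rightarrow> bool" where
  "standard_borel_via M f \<longleftrightarrow>
     bij_betw f (space M) UNIV \<and> f \<in> M \<rightarrow>\<^sub>M borel \<and> inv_into (space M) f \<in> borel \<rightarrow>\<^sub>M M"

definition measure_preserving :: "'a measure \<Rightarrow> ('a \<Rightarrow> 'a) \<Rightarrow> bool" where
  "measure_preserving M T \<longleftrightarrow> T \<in> M \<rightarrow>\<^sub>M M \<and> distr M M T = M"

definition mp_automorphism :: "'a measure \<Rightarrow> ('a \<Rightarrow> 'a) \<Rightarrow> bool" where
  "mp_automorphism M T \<longleftrightarrow>
     bij_betw T (space M) (space M) \<and> measure_preserving M T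
     \<and> measure_preserving M (inv_into (space M) T)"

definition rigidity_seq_along :: "'a measure \<Rightarrow> ('a \<Rightarrow> 'a) \<Rightarrow> (nat \<Rightarrow> nat) \<Rightarrow> (nat \<Rightarrow> 'a set) \<Rightarrow> bool" where
  "rigidity_seq_along M T q W \<longleftrightarrow>
     (\<forall>A\<in>sets M. (\<lambda>n. measure M (((((T ^^ q n) -` A \<inter> space M) - A) \<union> (A - ((T ^^ q n) -` A \<inter> space M))) \<inter> W n))
        \<longlonglongrightarrow> 0)"

end

theory Submission
  imports Defs
begin

definition sdw :: "('a \<Rightarrow> 'a) \<Rightarrow> 'a set \<Rightarrow> 'a set \<Rightarrow> 'a set" where
  "sdw S A W = ((S -` A - A) \<union> (A - S -` A)) \<inter> W"

locale rig = prob_space M for M :: "'a::metric_space measure" +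
  fixes T :: "'a \<Rightarrow> 'a" and q :: "nat \<Rightarrow> nat" and W :: "nat \<Rightarrow> 'a set"
  assumes spU: "space M = UNIV" and sB: "sets M = sets borel"
    and mp: "measure_preserving M T"
    and Wm: "\<And>n. W n \<in> sets M"
    and sup0: "(\<lambda>n. SUP x\<in>W n. ennreal (dist ((T ^^ q n) x) x)) \<longlonglongrightarrow> 0"
begin

lemma mp_pow: "measure_preserving M (T ^^ n)"
proof (induction n)
  case 0
  then show ?case by (simp add: measure_preserving_def distr_id2)
next
  case (Suc n)
  have TM: "T \<in> M \<rightarrow>\<^sub>M M" "distr M M T = M" using mp by (auto simp: measure_preserving_def)
  have NM: "T ^^ n \<in> M \<rightarrow>\<^sub>M M" "distr M M (T ^^ n) = M" using Suc by (auto simp: measure_preserving_def)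
  have m: "T ^^ Suc n \<in> M \<rightarrow>\<^sub>M M" using TM NM by (simp add: measurable_comp)
  have "distr M M (T \<circ> T ^^ n) = distr (distr M M (T ^^ n)) M T"
    using distr_distr[OF TM(1) NM(1)] by simp
  then show ?case using m TM NM by (simp add: measure_preserving_def comp_def)
qed

lemma Smeas: "T ^^ k \<in> M \<rightarrow>\<^sub>M M" using mp_pow by (simp add: measure_preserving_def)

lemma pre_sets: "A \<in> sets M \<Longrightarrow> (T ^^ k) -` A \<in> sets M"
  using measurable_sets[OF Smeas, of A k] spU by simp

lemma pre_meas: "A \<in> sets M \<Longrightarrow> measure M ((T ^^ k) -` A) = measure M A"
proof -
  assume A: "A \<in> sets M"
  have "measure (distr M M (T ^^ k)) A = measure M ((T ^^ k) -` A \<inter> space M)"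
    by (rule measure_distr[OF Smeas A])
  then show ?thesis using mp_pow[of k] spU by (simp add: measure_preserving_def)
qed

lemma sdw_sets: "A \<in> sets M \<Longrightarrow> sdw (T ^^ k) A (W n) \<in> sets M"
  unfolding sdw_def using pre_sets Wm by auto

definition P :: "'a set \<Rightarrow> bool" where
  "P A \<longleftrightarrow> (\<lambda>n. measure M (sdw (T ^^ q n) A (W n))) \<longlonglongrightarrow> 0"

lemma close_eventually:
  assumes "d > 0" shows "\<forall>\<^sub>F n in sequentially. \<forall>x\<in>W n. dist ((T ^^ q n) x) x < d"
proof -
  have "\<forall>\<^sub>F n in sequentially. (SUP x\<in>W n. ennreal (dist ((T ^^ q n) x) x)) < ennreal d"
    using order_tendstoD(2)[OF sup0] assms by simp
  then show ?thesis
  proof (rule eventually_mono)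
    fix n assume h: "(SUP x\<in>W n. ennreal (dist ((T ^^ q n) x) x)) < ennreal d"
    show "\<forall>x\<in>W n. dist ((T ^^ q n) x) x < d"
    proof
      fix x assume "x \<in> W n"
      then have "ennreal (dist ((T ^^ q n) x) x) < ennreal d"
        using h by (meson SUP_upper le_less_trans)
      then show "dist ((T ^^ q n) x) x < d" by (simp add: ennreal_less_iff)
    qed
  qed
qed

lemma P_closed:
  assumes F: "closed F" shows "P F"
proof -
  define N where "N k = (\<Union>y\<in>F. ball y (1 / Suc k)) - F" for k :: nat
  have Nm: "N k \<in> sets M" for k
    unfolding N_def sB using F by (intro sets.Diff borel_open borel_closed) auto
  have dec: "decseq N"
    unfolding decseq_def N_def
  proof (intro allI impI)
    fix m n :: nat assume "m \<le> n"
    then have "1 / real (Suc n) \<le> 1 / Suc m" by (simp add: frac_le)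
    then show "(\<Union>y\<in>F. ball y (1 / Suc n)) - F \<subseteq> (\<Union>y\<in>F. ball y (1 / Suc m)) - F"
      by auto
  qed
  have int: "(\<Inter>k. N k) = {}"
  proof (rule ccontr)
    assume "(\<Inter>k. N k) \<noteq> {}"
    then obtain x where x: "\<And>k. x \<in> N k" by auto
    then have "x \<notin> F" using N_def by auto
    moreover have "x \<in> closure F"
      unfolding closure_approachable
    proof (intro allI impI)
      fix e :: real assume "e > 0"
      then obtain k where k: "1 / Suc k < e" using nat_approx_posE by blast
      from x[of k] obtain y where "y \<in> F" "dist y x < 1 / Suc k" unfolding N_def by auto
      then show "\<exists>y\<in>F. dist y x < e" using k by (meson less_trans)
    qed
    ultimately show False using F closure_closed by auto
  qed
  have lim: "(\<lambda>k. measure M (N k)) \<longlonglongrightarrow> 0"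
    using finite_Lim_measure_decseq[of N] Nm dec int by auto
  show ?thesis unfolding P_def
  proof (rule LIMSEQ_I)
    fix r :: real assume r: "r > 0"
    obtain k where k: "measure M (N k) < r / 2"
      using LIMSEQ_D[OF lim, of "r/2"] r by auto
    have ev: "\<forall>\<^sub>F n in sequentially. \<forall>x\<in>W n. dist ((T ^^ q n) x) x < 1 / Suc k"
      by (rule close_eventually) simp
    then obtain n0 where n0: "\<And>n. n \<ge> n0 \<Longrightarrow> \<forall>x\<in>W n. dist ((T ^^ q n) x) x < 1 / Suc k"
      unfolding eventually_sequentially by auto
    show "\<exists>no. \<forall>n\<ge>no. norm (measure M (sdw (T ^^ q n) F (W n)) - 0) < r"
    proof (intro exI allI impI)
      fix n assume "n \<ge> n0"
      note c = n0[OF this]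
      let ?S = "T ^^ q n"
      have sub: "sdw ?S F (W n) \<subseteq> N k \<union> ?S -` N k"
      proof
        fix x assume x: "x \<in> sdw ?S F (W n)"
        then have d: "dist (?S x) x < 1 / Suc k" using c unfolding sdw_def by auto
        show "x \<in> N k \<union> ?S -` N k"
        proof (cases "x \<in> F")
          case True
          then have "?S x \<notin> F" using x unfolding sdw_def by auto
          then have "?S x \<in> N k" using True d unfolding N_def by (auto simp: dist_commute)
          then show ?thesis by auto
        next
          case False
          then have "?S x \<in> F" using x unfolding sdw_def by auto
          then have "x \<in> N k" using False d unfolding N_def by auto
          then show ?thesis by auto
        qed
      qed
      have "measure M (sdw ?S F (W n)) \<le> measure M (N k \<union> ?S -` N k)"
        using sub Nm pre_sets by (intro finite_measure_mono) auto
      also have "\<dots> \<le> measure M (N k) + measure M (?S -` N k)"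
        using Nm pre_sets by (intro measure_Un_le) auto
      also have "\<dots> = 2 * measure M (N k)" using pre_meas[OF Nm] by simp
      finally show "norm (measure M (sdw ?S F (W n)) - 0) < r" using k by simp
    qed
  qed
qed

lemma P_compl: "P A \<Longrightarrow> P (UNIV - A)"
proof -
  have "sdw S (UNIV - A) V = sdw S A V" for S V unfolding sdw_def by auto
  then show "P A \<Longrightarrow> P (UNIV - A)" unfolding P_def by simp
qed

lemma P_union:
  fixes A :: "nat \<Rightarrow> 'a set"
  assumes Am: "\<And>i. A i \<in> sets M" and PA: "\<And>i. P (A i)"
  shows "P (\<Union>i. A i)"
proof -
  define B where "B N = (\<Union>i. A i) - (\<Union>i<N. A i)" for N
  have Bm: "B N \<in> sets M" for N
  proof -
    have "(\<Union>i. A i) \<in> sets M" using Am by (intro sets.countable_UN) blast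
    moreover have "(\<Union>i<N. A i) \<in> sets M" using Am by (intro sets.countable_UN) blast
    ultimately show ?thesis unfolding B_def by (rule sets.Diff)
  qed
  have dec: "decseq B" unfolding decseq_def B_def by (auto simp del: UN_iff)
  have int: "(\<Inter>N. B N) = {}"
  proof -
    have "x \<notin> (\<Inter>N. B N)" for x
    proof
      assume "x \<in> (\<Inter>N. B N)"
      then have "x \<in> B 0" by blast
      then obtain i where "x \<in> A i" unfolding B_def by blast
      moreover have "x \<in> B (Suc i)" using \<open>x \<in> (\<Inter>N. B N)\<close> by blast
      ultimately show False unfolding B_def by blast
    qed
    then show ?thesis by blast
  qed
  have lim: "(\<lambda>N. measure M (B N)) \<longlonglongrightarrow> 0"
  proof -
    have "range B \<subseteq> sets M" using Bm by blast
    from finite_Lim_measure_decseq[OF this dec] show ?thesis using int by simp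
  qed
  show ?thesis unfolding P_def
  proof (rule LIMSEQ_I)
    fix r :: real assume r: "r > 0"
    obtain K where K: "measure M (B K) < r / 4"
      using LIMSEQ_D[OF lim, of "r/4"] r by auto
    have "(\<lambda>n. \<Sum>i<K. measure M (sdw (T ^^ q n) (A i) (W n))) \<longlonglongrightarrow> 0"
      using PA unfolding P_def by (intro tendsto_null_sum) auto
    from LIMSEQ_D[OF this, of "r/2"] r obtain n0 where
      n0: "\<And>n. n \<ge> n0 \<Longrightarrow> norm ((\<Sum>i<K. measure M (sdw (T ^^ q n) (A i) (W n))) - 0) < r / 2"
      by auto
    show "\<exists>no. \<forall>n\<ge>no. norm (measure M (sdw (T ^^ q n) (\<Union>i. A i) (W n)) - 0) < r"
    proof (intro exI allI impI)
      fix n assume "n \<ge> n0"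
      note c = n0[OF this]
      let ?S = "T ^^ q n"
      let ?U = "\<Union>i<K. sdw ?S (A i) (W n)"
      have sub: "sdw ?S (\<Union>i. A i) (W n) \<subseteq> (?U \<union> B K) \<union> ?S -` B K"
      proof
        fix x assume x: "x \<in> sdw ?S (\<Union>i. A i) (W n)"
        show "x \<in> (?U \<union> B K) \<union> ?S -` B K"
        proof (cases "x \<in> (\<Union>i. A i)")
          case True
          then have nS: "?S x \<notin> (\<Union>i. A i)" and xW: "x \<in> W n" using x unfolding sdw_def by auto
          show ?thesis
          proof (cases "x \<in> (\<Union>i<K. A i)")
            case True
            then obtain i where "i < K" "x \<in> A i" by auto
            then have "x \<in> sdw ?S (A i) (W n)" using nS xW unfolding sdw_def by auto
            then show ?thesis using \<open>i < K\<close> by auto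
          next
            case False
            then have "x \<in> B K" using True unfolding B_def by auto
            then show ?thesis by auto
          qed
        next
          case False
          then have nS: "?S x \<in> (\<Union>i. A i)" and xW: "x \<in> W n" using x unfolding sdw_def by auto
          show ?thesis
          proof (cases "?S x \<in> (\<Union>i<K. A i)")
            case True
            then obtain i where "i < K" "?S x \<in> A i" by auto
            then have "x \<in> sdw ?S (A i) (W n)" using False xW unfolding sdw_def by auto
            then show ?thesis using \<open>i < K\<close> by auto
          next
            case F2: False
            then have "?S x \<in> B K" using nS unfolding B_def by auto
            then show ?thesis by auto
          qed
        qed
      qed
      have Um: "?U \<in> sets M" by (intro sets.finite_UN finite_lessThan ballI sdw_sets Am)
      have "measure M (sdw ?S (\<Union>i. A i) (W n)) \<le> measure M ((?U \<union> B K) \<union> ?S -` B K)"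
        using sub Um Bm pre_sets[OF Bm] by (intro finite_measure_mono) (auto intro!: sets.Un)
      also have "\<dots> \<le> measure M (?U \<union> B K) + measure M (?S -` B K)"
        using Um Bm pre_sets[OF Bm] by (intro measure_Un_le sets.Un) auto
      also have "\<dots> \<le> measure M ?U + measure M (B K) + measure M (?S -` B K)"
        using measure_Un_le[OF Um Bm[of K]] by linarith
      also have "\<dots> \<le> (\<Sum>i<K. measure M (sdw ?S (A i) (W n))) + 2 * measure M (B K)"
      proof -
        have "measure M ?U \<le> (\<Sum>i<K. measure M (sdw ?S (A i) (W n)))"
          by (rule measure_UNION_le) (auto intro: sdw_sets Am)
        then show ?thesis using pre_meas[OF Bm[of K], of "q n"] by linarith
      qed
      finally have calc: "measure M (sdw ?S (\<Union>i. A i) (W n)) \<le> (\<Sum>i<K. measure M (sdw ?S (A i) (W n))) + 2 * measure M (B K)" .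
      have c': "(\<Sum>i<K. measure M (sdw ?S (A i) (W n))) < r / 2"
        using c by (simp add: abs_less_iff)
      have "measure M (sdw ?S (\<Union>i. A i) (W n)) < r" using calc c' K by linarith
      then show "norm (measure M (sdw ?S (\<Union>i. A i) (W n)) - 0) < r" by simp
    qed
  qed
qed

lemma P_all: "A \<in> sets M \<Longrightarrow> P A"
proof -
  assume "A \<in> sets M"
  then have "A \<in> sigma_sets UNIV {S. open S}" by (metis sB sets_borel)
  then show "P A"
  proof (induction rule: sigma_sets.induct)
    case (Basic a)
    then have "P (UNIV - (UNIV - a))" by (intro P_compl P_closed) (auto simp: closed_def)
    then show ?case by (simp add: Diff_Diff_Int)
  next
    case Empty
    then show ?case using P_closed[of "{}"] by simp
  next
    case (Compl a) then show ?case using P_compl by blast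
  next
    case (Union a)
    then show ?case using P_union[of a] sB sets_borel by auto
  qed
qed

end

theorem lemma3p3:
  fixes M :: "'a::metric_space measure" and T :: "'a \<Rightarrow> 'a"
    and f :: "'a \<Rightarrow> 'b::polish_space"
    and W :: "nat \<Rightarrow> 'a set" and q :: "nat \<Rightarrow> nat"
  assumes "prob_space M"
    and "space M = UNIV" and "sets M = sets borel"
    and "standard_borel_via M f"
    and "mp_automorphism M T"
    and "\<And>n. W n \<in> sets M"
    and "strict_mono q"
    and "(\<lambda>n. SUP x\<in>W n. ennreal (dist ((T ^^ q n) x) x)) \<longlonglongrightarrow> 0"
  shows "rigidity_seq_along M T q W"
proof -
  interpret prob_space M by (fact assms(1))
  interpret rig M T q W
  proof (unfold_locales)
    show "space M = UNIV" "sets M = sets borel" by (fact assms(2), fact assms(3))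
    show "measure_preserving M T" using assms(5) unfolding mp_automorphism_def by blast
    show "\<And>n. W n \<in> sets M" by (fact assms(6))
    show "(\<lambda>n. SUP x\<in>W n. ennreal (dist ((T ^^ q n) x) x)) \<longlonglongrightarrow> 0" by (fact assms(8))
  qed
  show ?thesis
    unfolding rigidity_seq_along_def
  proof
    fix A assume A: "A \<in> sets M"
    have "P A" by (rule P_all[OF A])
    moreover have "(T ^^ q n) -` A \<inter> space M = (T ^^ q n) -` A" for n
      using assms(2) by simp
    ultimately show "(\<lambda>n. measure M (((((T ^^ q n) -` A \<inter> space M) - A) \<union> (A - ((T ^^ q n) -` A \<inter> space M))) \<inter> W n)) \<longlonglongrightarrow> 0"
      unfolding P_def sdw_def by presburger
  qed
qed

end
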